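(* Let $x_s<x_t$ be integers, let $C\ge 0$, and let $f:[x_s,x_t]\to\mathbb{R}$ be such that $([x_s,x_t],f)$ is an Ameso($C$) pair. Suppose there exist $x^0\in[x_s,x_t]$ and a positive integer $b$ with $[x^0-b,x^0]\subseteq[x_s,x_t]$ such that $f(x^0)=\min_{y\in[x^0-b,x^0]}f(y)$ and $f(x^0)+C\le\max_{y\in[x^0-b,x^0]}f(y)$. Let $w^*=\min\{w\in[x^0-b,x^0]: f(w)=\max_{y\in[x^0-b,x^0]}f(y)\}$. Then $x^0-b\le w^*<x^0-\frac b2$.
   Context: For integers $a\le b$, $[a,b]$ denotes the set of integers $\{a,a+1,\dots,b\}$. Floors and ceilings of vectors are taken componentwise. A set $D^n\subseteq\mathbb{Z}^n$ is an Ameso set if $\lceil(\vec x+\vec y)/2\rceil,\lfloor(\vec x+\vec y)/2\rfloor\in D^n$ for all $\vec x,\vec y\in D^n$. For $C\ge 0$, $(D^n,f)$ is an Ameso($C$) pair if $D^n$ is an Ameso set, $f:D^n\to\mathbb{R}$ is bounded below, and $f(\vec x)+f(\vec y)+C\ge f(\lceil(\vec x+\vec y)/2\rceil)+f(\lfloor(\vec x+\vec y)/2\rfloor)$ for all $\vec x,\vec y\in D^n$. *)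

theory Defs
  imports Complex_Main
begin

text \<open>One-dimensional instance (n = 1) of Ameso sets and Ameso(C) pairs.
  Points of D are integers; ceiling/floor of (x+y)/2 taken in the reals.\<close>

definition ameso_set :: "int set \<Rightarrow> bool" where
  "ameso_set D \<longleftrightarrow>
     (\<forall>x\<in>D. \<forall>y\<in>D. \<lceil>real_of_int (x + y) / 2\<rceil> \<in> D \<and> \<lfloor>real_of_int (x + y) / 2\<rfloor> \<in> D)"

definition ameso_pair :: "real \<Rightarrow> int set \<Rightarrow> (int \<Rightarrow> real) \<Rightarrow> bool" where
  "ameso_pair C D f \<longleftrightarrow> C \<ge> 0 \<and> ameso_set D \<and> bdd_below (f ` D) \<and>
     (\<forall>x\<in>D. \<forall>y\<in>D. f x + f y + C \<ge>
        f \<lceil>real_of_int (x + y) / 2\<rceil> + f \<lfloor>real_of_int (x + y) / 2\<rfloor>)"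

end

theory Submission
  imports Defs
begin

theorem lemma4:
  fixes xs xt x0 b :: int and C :: real and f :: "int \<Rightarrow> real"
  assumes "xs < xt" and "C \<ge> 0"
    and "ameso_pair C {xs..xt} f"
    and "x0 \<in> {xs..xt}" and "b > 0" and "{x0 - b..x0} \<subseteq> {xs..xt}"
    and "f x0 = Min (f ` {x0 - b..x0})"
    and "f x0 + C \<le> Max (f ` {x0 - b..x0})"
  shows "let w = Min {w \<in> {x0 - b..x0}. f w = Max (f ` {x0 - b..x0})}
         in x0 - b \<le> w \<and> real_of_int w < real_of_int x0 - real_of_int b / 2"
proof -
  define S where "S = {x0 - b..x0}"
  define M where "M = Max (f ` S)"
  define W where "W = {w \<in> S. f w = M}"
  have finS: "finite S" and neS: "S \<noteq> {}" using assms(5) by (auto simp: S_def)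
  have "M \<in> f ` S" unfolding M_def using finS neS by (intro Max_in) auto
  then have neW: "W \<noteq> {}" unfolding W_def by auto
  have finW: "finite W" using finS by (auto simp: W_def)
  define w where "w = Min W"
  have wW: "w \<in> W" unfolding w_def using finW neW by (rule Min_in)
  have wle: "\<And>v. v \<in> W \<Longrightarrow> w \<le> v" unfolding w_def using finW by simp
  have leM: "\<And>v. v \<in> S \<Longrightarrow> f v \<le> M" unfolding M_def using finS by simp
  have geM: "\<And>v. v \<in> S \<Longrightarrow> f x0 \<le> f v" using assms(7) finS by (simp add: S_def)
  have ws: "w \<in> S" "f w = M" using wW by (auto simp: W_def)
  have "real_of_int w < real_of_int x0 - real_of_int b / 2"
  proof (rule ccontr)
    assume "\<not> ?thesis"
    then have h: "2 * w \<ge> 2 * x0 - b" by linarith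
    define y where "y = 2 * w - x0"
    have yS: "y \<in> S" using h ws(1) by (auto simp: S_def y_def)
    have "y \<in> {xs..xt}" "x0 \<in> {xs..xt}" using yS assms(6) assms(4) by (auto simp: S_def)
    then have ineq: "f y + f x0 + C \<ge> f \<lceil>real_of_int (y + x0) / 2\<rceil> + f \<lfloor>real_of_int (y + x0) / 2\<rfloor>"
      using assms(3) unfolding ameso_pair_def by blast
    have "real_of_int (y + x0) / 2 = real_of_int w" by (simp add: y_def)
    then have "f y + f x0 + C \<ge> 2 * M" using ineq ws(2) by simp
    moreover have "f x0 + C \<le> M" using assms(8) by (simp add: M_def S_def)
    ultimately have "f y \<ge> M" by linarith
    with leM[OF yS] have "y \<in> W" using yS by (auto simp: W_def)
    then have "w \<le> y" by (rule wle)
    then have wx: "w = x0" using ws(1) by (auto simp: y_def S_def)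
    have bS: "x0 - b \<in> S" using assms(5) by (auto simp: S_def)
    have "f x0 = M" using ws(2) wx by simp
    then have "f (x0 - b) = M" using leM[OF bS] geM[OF bS] by simp
    then have "x0 - b \<in> W" using bS by (auto simp: W_def)
    then have "w \<le> x0 - b" by (rule wle)
    then show False using wx assms(5) by simp
  qed
  moreover have "x0 - b \<le> w" using ws(1) by (simp add: S_def)
  ultimately show ?thesis unfolding Let_def w_def W_def M_def S_def by simp
qed

end
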